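(* Let $B:[0,1]\to\{0,1\}$ be the Bernoulli channel. For every $\lambda_1,\lambda_2>0$ with $\lambda_1+\lambda_2<1$, \[ \frac14\le\dot{C}_{\mathrm{DI}}(B)\le\limsup_{n\to\infty}\frac{1}{n\log n}\log N_{\mathrm{DI}}(n,\lambda_1,\lambda_2)\le\frac12. \]
   Context: The Bernoulli channel maps $x\in[0,1]$ to the distribution $B_x$ on $\{0,1\}$ with $B_x(1)=x$, $B_x(0)=1-x$; for $x^n\in[0,1]^n$, $B_{x^n}(y^n)=\prod_iB_{x_i}(y_i)$. An $(n,N,\lambda_1,\lambda_2)$-DI code is a family $\{(u_j,\mathcal{E}_j):j\in[N]\}$, $u_j\in[0,1]^n$, $\mathcal{E}_j\subset\{0,1\}^n$, with $B_{u_j}(\mathcal{E}_j)\ge1-\lambda_1$ for all $j$ and $B_{u_j}(\mathcal{E}_k)\le\lambda_2$ for $j\ne k$; $N_{\mathrm{DI}}(n,\lambda_1,\lambda_2)$ is the largest such $N$. Logarithms base 2; $\dot{C}_{\mathrm{DI}}(B)=\inf_{\lambda_1,\lambda_2>0}\liminf_{n\to\infty}\frac{1}{n\log n}\log N_{\mathrm{DI}}(n,\lambda_1,\lambda_2)$. *)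

theory Defs
  imports Complex_Main "HOL-Library.Extended_Real"
begin

text \<open>Output words y^n in {0,1}^n are boolean lists of length n (True = 1).
  An input word x^n in [0,1]^n is a function u :: nat => real, used on indices i < n.\<close>

definition bern_word :: "nat \<Rightarrow> (nat \<Rightarrow> real) \<Rightarrow> bool list \<Rightarrow> real" where
  "bern_word n u y = (\<Prod>i<n. if y ! i then u i else 1 - u i)"

definition bern_prob :: "nat \<Rightarrow> (nat \<Rightarrow> real) \<Rightarrow> bool list set \<Rightarrow> real" where
  "bern_prob n u E = (\<Sum>y\<in>E. bern_word n u y)"

definition is_DI_code ::
  "nat \<Rightarrow> nat \<Rightarrow> real \<Rightarrow> real \<Rightarrow> (nat \<Rightarrow> nat \<Rightarrow> real) \<Rightarrow> (nat \<Rightarrow> bool list set) \<Rightarrow> bool" where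
  "is_DI_code n N l1 l2 u E \<longleftrightarrow>
     (\<forall>j<N. (\<forall>i<n. 0 \<le> u j i \<and> u j i \<le> 1) \<and> E j \<subseteq> {y. length y = n}
            \<and> bern_prob n (u j) (E j) \<ge> 1 - l1) \<and>
     (\<forall>j<N. \<forall>k<N. j \<noteq> k \<longrightarrow> bern_prob n (u j) (E k) \<le> l2)"

definition N_DI :: "nat \<Rightarrow> real \<Rightarrow> real \<Rightarrow> enat" where
  "N_DI n l1 l2 = Sup {enat N | N. \<exists>u E. is_DI_code n N l1 l2 u E}"

definition DI_rate :: "real \<Rightarrow> real \<Rightarrow> nat \<Rightarrow> ereal" where
  "DI_rate l1 l2 n = (case N_DI n l1 l2 of
       enat N \<Rightarrow> ereal (log 2 (real N) / (real n * log 2 (real n)))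
     | \<infinity> \<Rightarrow> \<infinity>)"

definition C_DI_dot :: ereal where
  "C_DI_dot = (INF l1\<in>{0<..}. INF l2\<in>{0<..}. liminf (DI_rate l1 l2))"

end

theory Submission
  imports Defs "HOL-Real_Asymp.Real_Asymp" "HOL-Library.FuncSet"
begin


definition L :: "nat \<Rightarrow> bool list set" where "L n = {y. length y = n}"

lemma finite_L[simp]: "finite (L n)"
  unfolding L_def by (rule finite_subset[OF _ finite_lists_length_eq[of UNIV n]]) auto

lemma L_Suc: "L (Suc n) = (\<lambda>(y,b). y @ [b]) ` (L n \<times> UNIV)"
proof (rule set_eqI, rule iffI)
  fix x assume "x \<in> L (Suc n)"
  then have "length x = Suc n" by (simp add: L_def)
  then obtain y b where "x = y @ [b]" "length y = n"
    by (metis append_butlast_last_id length_butlast length_greater_0_conv diff_Suc_1 zero_less_Suc)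
  then show "x \<in> (\<lambda>(y,b). y @ [b]) ` (L n \<times> UNIV)" by (force simp: L_def)
qed (auto simp: L_def)

lemma sum_L_Suc: "(\<Sum>y\<in>L (Suc n). f y) = (\<Sum>y\<in>L n. f (y @ [True]) + f (y @ [False]))"
proof -
  have inj: "inj_on (\<lambda>(y,b). y @ [b]) (L n \<times> (UNIV::bool set))"
    by (auto simp: inj_on_def)
  have "(\<Sum>y\<in>L (Suc n). f y) = (\<Sum>p\<in>L n \<times> (UNIV::bool set). f ((\<lambda>(y,b). y @ [b]) p))"
    unfolding L_Suc by (rule sum.reindex[OF inj, unfolded comp_def])
  also have "\<dots> = (\<Sum>y\<in>L n. \<Sum>b\<in>(UNIV::bool set). f (y @ [b]))"
    by (simp add: sum.cartesian_product case_prod_unfold)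
  also have "\<dots> = (\<Sum>y\<in>L n. f (y @ [True]) + f (y @ [False]))"
    by (simp add: UNIV_bool add.commute)
  finally show ?thesis .
qed

lemma bern_word_snoc: "length y = n \<Longrightarrow>
  bern_word (Suc n) u (y @ [b]) = bern_word n u y * (if b then u n else 1 - u n)"
  unfolding bern_word_def by (simp add: nth_append)

lemma bern_word_nonneg: "(\<forall>i<n. 0 \<le> u i \<and> u i \<le> 1) \<Longrightarrow> 0 \<le> bern_word n u y"
  unfolding bern_word_def by (intro prod_nonneg) auto

lemma bern_mass: "(\<Sum>y\<in>L n. bern_word n u y) = 1"
proof (induction n)
  case 0
  then show ?case by (simp add: L_def bern_word_def)
next
  case (Suc n)
  have "(\<Sum>y\<in>L (Suc n). bern_word (Suc n) u y) = (\<Sum>y\<in>L n. bern_word n u y)"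
    unfolding sum_L_Suc
    by (rule sum.cong) (auto simp: bern_word_snoc L_def algebra_simps)
  then show ?case using Suc by simp
qed

definition lin :: "(nat \<Rightarrow> real) \<Rightarrow> nat \<Rightarrow> bool list \<Rightarrow> real" where
  "lin a n y = (\<Sum>i<n. if y ! i then a i else 0)"

lemma lin_snoc: "length y = n \<Longrightarrow> lin a (Suc n) (y @ [b]) = lin a n y + (if b then a n else 0)"
  unfolding lin_def by (simp add: nth_append)

lemma bern_var: "(\<Sum>y\<in>L n. bern_word n u y * (lin a n y - (\<Sum>i<n. a i * u i))^2)
   = (\<Sum>i<n. (a i)^2 * (u i * (1 - u i)))"
proof (induction n)
  case 0
  then show ?case by (simp add: L_def bern_word_def lin_def)
next
  case (Suc n)
  have pt: "\<And>Z. u n * (Z + a n - a n * u n)^2 + (1 - u n) * (Z - a n * u n)^2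
        = Z^2 + (a n)^2 * (u n * (1 - u n))"
    by (simp add: power2_eq_square algebra_simps)
  have "(\<Sum>y\<in>L (Suc n). bern_word (Suc n) u y * (lin a (Suc n) y - (\<Sum>i<Suc n. a i * u i))^2)
     = (\<Sum>y\<in>L n. bern_word n u y * (lin a n y - (\<Sum>i<n. a i * u i))^2
              + bern_word n u y * ((a n)^2 * (u n * (1 - u n))))"
    unfolding sum_L_Suc
  proof (rule sum.cong)
    fix y assume "y \<in> L n"
    then have ly: "length y = n" by (simp add: L_def)
    define Z where "Z = lin a n y - (\<Sum>i<n. a i * u i)"
    have "bern_word n u y * u n * (Z + a n - a n * u n)^2 + bern_word n u y * (1 - u n) * (Z - a n * u n)^2
       = bern_word n u y * (u n * (Z + a n - a n * u n)^2 + (1 - u n) * (Z - a n * u n)^2)"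
      by (simp add: algebra_simps)
    also have "\<dots> = bern_word n u y * Z^2 + bern_word n u y * ((a n)^2 * (u n * (1 - u n)))"
      by (simp only: pt) (simp add: algebra_simps)
    finally show "bern_word (Suc n) u (y @ [True]) * (lin a (Suc n) (y @ [True]) - (\<Sum>i<Suc n. a i * u i))\<^sup>2 +
         bern_word (Suc n) u (y @ [False]) * (lin a (Suc n) (y @ [False]) - (\<Sum>i<Suc n. a i * u i))\<^sup>2 =
         bern_word n u y * (lin a n y - (\<Sum>i<n. a i * u i))\<^sup>2 + bern_word n u y * ((a n)\<^sup>2 * (u n * (1 - u n)))"
      using ly by (simp add: bern_word_snoc lin_snoc Z_def algebra_simps)
  qed simp
  also have "\<dots> = (\<Sum>i<n. (a i)^2 * (u i * (1 - u i))) + (a n)^2 * (u n * (1 - u n))"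
    by (simp add: sum.distrib Suc sum_distrib_right[symmetric] bern_mass)
  finally show ?case by simp
qed

lemma bern_BC: "(\<Sum>y\<in>L n. sqrt (bern_word n u y * bern_word n w y))
   = (\<Prod>i<n. sqrt (u i * w i) + sqrt ((1 - u i) * (1 - w i)))"
proof (induction n)
  case 0
  then show ?case by (simp add: L_def bern_word_def)
next
  case (Suc n)
  have "(\<Sum>y\<in>L (Suc n). sqrt (bern_word (Suc n) u y * bern_word (Suc n) w y))
     = (\<Sum>y\<in>L n. sqrt (bern_word n u y * bern_word n w y) * (sqrt (u n * w n) + sqrt ((1 - u n) * (1 - w n))))"
    unfolding sum_L_Suc
    by (rule sum.cong) (auto simp: bern_word_snoc L_def algebra_simps real_sqrt_mult[symmetric])
  then show ?case using Suc by (simp add: sum_distrib_right[symmetric])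
qed



lemma amgm_eps: fixes x y e :: real assumes "e > 0" shows "x * y \<le> x^2 / (2*e) + e * y^2 / 2"
proof -
  have "0 \<le> (x - e*y)^2" by simp
  then have "2*e*(x*y) \<le> x^2 + e^2*y^2" by (simp add: power2_eq_square algebra_simps)
  then have "x*y \<le> (x^2 + e^2*y^2) / (2*e)" using assms by (simp add: field_simps)
  also have "\<dots> = x^2 / (2*e) + e * y^2 / 2" using assms by (simp add: field_simps power2_eq_square)
  finally show ?thesis .
qed

lemma tv_bc:
  assumes u: "\<forall>i<n. 0 \<le> u i \<and> u i \<le> 1" and w: "\<forall>i<n. 0 \<le> w i \<and> w i \<le> 1"
    and E: "E \<subseteq> L n" and d: "d > 0" and dle: "d \<le> bern_prob n u E - bern_prob n w E"
  shows "d^2 \<le> 8 * (1 - (\<Sum>y\<in>L n. sqrt (bern_word n u y * bern_word n w y)))"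
proof -
  define p where "p = bern_word n u"
  define q where "q = bern_word n w"
  have p0: "\<And>y. 0 \<le> p y" unfolding p_def using bern_word_nonneg[OF u] .
  have q0: "\<And>y. 0 \<le> q y" unfolding q_def using bern_word_nonneg[OF w] .
  define e where "e = d / 4"
  define S where "S = (\<Sum>y\<in>L n. sqrt (p y * q y))"
  have e0: "e > 0" using d by (simp add: e_def)
  have pt0: "\<bar>a\<^sup>2 - b\<^sup>2\<bar> \<le> (a\<^sup>2 + b\<^sup>2 - 2 * (a * b)) / (2*e) + e * (a\<^sup>2 + b\<^sup>2)"
    if "a \<ge> 0" "b \<ge> 0" for a b :: real
  proof -
    have f: "a\<^sup>2 - b\<^sup>2 = (a - b) * (a + b)" by (simp add: power2_eq_square algebra_simps)
    have g: "\<bar>a + b\<bar> = a + b" using that by simp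
    have "\<bar>a\<^sup>2 - b\<^sup>2\<bar> = \<bar>a - b\<bar> * (a + b)"
      unfolding f abs_mult g ..
    also have "\<dots> \<le> (\<bar>a - b\<bar>)^2 / (2*e) + e * (a + b)^2 / 2"
      by (rule amgm_eps[OF e0])
    also have "(\<bar>a - b\<bar>)^2 = a\<^sup>2 + b\<^sup>2 - 2 * (a * b)"
      by (simp add: power2_eq_square algebra_simps)
    also have "e * (a + b)^2 / 2 \<le> e * (a\<^sup>2 + b\<^sup>2)"
    proof -
      have "(a + b)^2 \<le> 2 * (a\<^sup>2 + b\<^sup>2)"
        using sum_squares_bound[of a b] by (simp add: power2_eq_square algebra_simps)
      then have "e * (a + b)^2 \<le> e * (2 * (a\<^sup>2 + b\<^sup>2))" by (rule mult_left_mono) (use e0 in auto)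
      then show ?thesis by (simp add: algebra_simps)
    qed
    finally show ?thesis by simp
  qed
  have pt: "\<bar>p y - q y\<bar> \<le> (p y + q y - 2 * sqrt (p y * q y)) / (2*e) + e * (p y + q y)" for y
    using pt0[of "sqrt (p y)" "sqrt (q y)"] p0[of y] q0[of y] by (simp add: real_sqrt_mult)
  have "d \<le> (\<Sum>y\<in>E. p y - q y)"
    using dle by (simp add: bern_prob_def p_def q_def sum_subtractf)
  also have "\<dots> \<le> (\<Sum>y\<in>E. \<bar>p y - q y\<bar>)" by (rule sum_mono) simp
  also have "\<dots> \<le> (\<Sum>y\<in>L n. \<bar>p y - q y\<bar>)" by (rule sum_mono2) (use E in auto)
  also have "\<dots> \<le> (\<Sum>y\<in>L n. (p y + q y - 2 * sqrt (p y * q y)) / (2*e) + e * (p y + q y))"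
    by (rule sum_mono) (rule pt)
  also have "\<dots> = (2 - 2 * S) / (2*e) + 2 * e"
  proof -
    have "(\<Sum>y\<in>L n. (p y + q y - 2 * sqrt (p y * q y)) / (2*e) + e * (p y + q y))
        = (\<Sum>y\<in>L n. (p y + q y - 2 * sqrt (p y * q y))) / (2*e) + e * (\<Sum>y\<in>L n. p y + q y)"
      by (subst sum.distrib) (simp add: sum_divide_distrib sum_distrib_left)
    also have "(\<Sum>y\<in>L n. (p y + q y - 2 * sqrt (p y * q y))) = (\<Sum>y\<in>L n. p y) + (\<Sum>y\<in>L n. q y) - 2 * S"
      by (simp only: sum.distrib sum_subtractf sum_distrib_left S_def)
    also have "(\<Sum>y\<in>L n. p y + q y) = (\<Sum>y\<in>L n. p y) + (\<Sum>y\<in>L n. q y)"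
      by (simp only: sum.distrib)
    also have "(\<Sum>y\<in>L n. p y) = 1" unfolding p_def by (rule bern_mass)
    also have "(\<Sum>y\<in>L n. q y) = 1" unfolding q_def by (rule bern_mass)
    finally show ?thesis by simp
  qed
  also have "(2 - 2 * S) / (2*e) = 4 * (1 - S) / d"
    using d by (simp add: e_def field_simps)
  finally have "d \<le> 4 * (1 - S) / d + 2 * e" .
  then have "d / 2 \<le> 4 * (1 - S) / d" by (simp add: e_def del: times_divide_eq_left times_divide_eq_right)
  then have "d / 2 * d \<le> 4 * (1 - S)" using d by (simp add: le_divide_eq)
  then have "d^2 \<le> 8 * (1 - S)" by (simp add: power2_eq_square)
  then show ?thesis by (simp add: S_def p_def q_def)
qed

lemma one_minus_cos_le: "1 - cos z \<le> (z::real)^2 / 2"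
proof -
  have "cos z = cos (2 * (z/2))" by simp
  also have "\<dots> = 1 - 2 * sin (z/2) ^ 2" by (rule cos_double_sin)
  finally have c: "1 - cos z = 2 * sin (z/2) ^ 2" by simp
  have "sin (z/2) ^ 2 \<le> (z/2)^2"
    using abs_sin_x_le_abs_x[of "z/2"] by (metis abs_ge_zero power2_abs power_mono)
  then show ?thesis using c by (simp add: power2_eq_square)
qed

definition theta :: "real \<Rightarrow> real" where "theta x = arcsin (sqrt x)"

lemma theta_bounds: "0 \<le> x \<Longrightarrow> x \<le> 1 \<Longrightarrow> 0 \<le> theta x \<and> theta x \<le> pi/2"
proof -
  assume "0 \<le> x" "x \<le> 1"
  then have a0: "0 \<le> sqrt x" "sqrt x \<le> 1" by auto
  have a: "-1 \<le> sqrt x" "sqrt x \<le> 1" "sqrt x \<in> {0..1}" using a0 by (linarith, linarith, simp)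
  show ?thesis unfolding theta_def using arcsin_nonneg[OF a(3)] arcsin_ubound[OF a(1,2)] by auto
qed

lemma bc_factor: assumes "0 \<le> x" "x \<le> 1" "0 \<le> x'" "x' \<le> 1"
  shows "sqrt (x * x') + sqrt ((1 - x) * (1 - x')) = cos (theta x - theta x')"
proof -
  have a0: "0 \<le> sqrt x" "sqrt x \<le> 1" "0 \<le> sqrt x'" "sqrt x' \<le> 1" using assms by auto
  then have a: "-1 \<le> sqrt x" "sqrt x \<le> 1" "-1 \<le> sqrt x'" "sqrt x' \<le> 1" by linarith+
  have s: "sin (theta x) = sqrt x" "sin (theta x') = sqrt x'" unfolding theta_def
    using sin_arcsin[OF a(1,2)] sin_arcsin[OF a(3,4)] by auto
  have c: "cos (theta x) = sqrt (1 - x)" "cos (theta x') = sqrt (1 - x')"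
    unfolding theta_def using cos_arcsin[OF a(1,2)] cos_arcsin[OF a(3,4)] assms by auto
  show ?thesis by (simp add: cos_diff s c real_sqrt_mult)
qed

lemma prod_ge_1_minus: fixes c :: "nat \<Rightarrow> real"
  assumes "\<forall>i<n. 0 \<le> c i \<and> c i \<le> 1 \<and> 1 - e \<le> c i" "0 \<le> e"
  shows "(\<Prod>i<n. c i) \<ge> 1 - n * e"
  using assms
proof (induction n)
  case 0 then show ?case by simp
next
  case (Suc n)
  have IH: "(\<Prod>i<n. c i) \<ge> 1 - n * e" using Suc by auto
  have P0: "(\<Prod>i<n. c i) \<ge> 0" using Suc.prems by (intro prod_nonneg) auto
  have cn: "0 \<le> c n" "c n \<le> 1" "1 - e \<le> c n" using Suc.prems by auto
  have "(\<Prod>i<Suc n. c i) = (\<Prod>i<n. c i) * c n" by simp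
  moreover have "(\<Prod>i<n. c i) * c n \<ge> (1 - n*e) * c n" using IH cn by (simp add: mult_right_mono)
  moreover have "(1 - n*e) * c n \<ge> 1 - (n+1)*e"
  proof (cases "n*e \<le> 1")
    case True
    have "(1 - n*e) * c n \<ge> (1 - n*e) * (1 - e)" using True cn by (simp add: mult_left_mono)
    moreover have "(1 - n*e) * (1 - e) \<ge> 1 - (n+1)*e" using Suc.prems(2)
      by (simp add: algebra_simps)
    ultimately show ?thesis by linarith
  next
    case False
    have "(1 - n*e) * c n \<ge> (1 - n*e) * 1" using False cn by (intro mult_left_mono_neg) auto
    then show ?thesis using Suc.prems(2) by (simp add: algebra_simps)
  qed
  ultimately show ?case by (simp add: algebra_simps)
qed



definition cell :: "nat \<Rightarrow> real \<Rightarrow> nat" where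
  "cell K x = nat \<lfloor>theta x * (2 * real K / pi)\<rfloor>"

lemma cell_le: assumes "0 \<le> x" "x \<le> 1" "K > 0" shows "cell K x \<le> K"
proof -
  have t: "theta x \<le> pi/2" using theta_bounds assms by auto
  have "theta x * (2 * real K / pi) \<le> pi/2 * (2 * real K / pi)"
    using t assms by (intro mult_right_mono) auto
  also have "\<dots> = real K" by simp
  finally have "\<lfloor>theta x * (2 * real K / pi)\<rfloor> \<le> int K" by linarith
  then show ?thesis unfolding cell_def by simp
qed

lemma cell_close: assumes "0 \<le> x" "x \<le> 1" "0 \<le> x'" "x' \<le> 1" "K > 0" "cell K x = cell K x'"
  shows "\<bar>theta x - theta x'\<bar> < pi / (2 * real K)"
proof -
  define a where "a = theta x * (2 * real K / pi)"
  define a' where "a' = theta x' * (2 * real K / pi)"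
  have "a \<ge> 0" "a' \<ge> 0" using theta_bounds assms by (auto simp: a_def a'_def)
  then have "\<lfloor>a\<rfloor> = \<lfloor>a'\<rfloor>" using assms(6) unfolding cell_def a_def[symmetric] a'_def[symmetric]
    by (simp add: nat_eq_iff2)
  then have "\<bar>a - a'\<bar> < 1" by linarith
  moreover have "a - a' = (theta x - theta x') * (2 * real K / pi)"
    by (simp only: a_def a'_def left_diff_distrib)
  ultimately have lt1: "\<bar>theta x - theta x'\<bar> * (2 * real K / pi) < 1"
    by (simp add: abs_mult)
  then have "\<bar>theta x - theta x'\<bar> * (2 * real K) < pi"
  proof -
    have "\<bar>theta x - theta x'\<bar> * (2 * real K) / pi < 1" using lt1 by (simp only: times_divide_eq_right)
    then show ?thesis using divide_less_eq_1_pos[OF pi_gt_zero, of "\<bar>theta x - theta x'\<bar> * (2 * real K)"] by blast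
  qed
  then show ?thesis using assms(5) by (simp add: less_divide_eq mult.commute)
qed

lemma code_card_bound:
  assumes code: "is_DI_code n N l1 l2 u E" and dpos: "0 < 1 - l1 - l2" and K: "K > 0"
    and Kbig: "real n * pi^2 < (1 - l1 - l2)^2 * (real K)^2"
  shows "N \<le> (K+1)^n"
proof -
  define d where "d = 1 - l1 - l2"
  define f where "f j = (\<lambda>i\<in>{..<n}. cell K (u j i))" for j
  have ub: "\<forall>i<n. 0 \<le> u j i \<and> u j i \<le> 1" if "j < N" for j
    using code that unfolding is_DI_code_def by blast
  have img: "f ` {..<N} \<subseteq> PiE {..<n} (\<lambda>_. {..K})"
  proof
    fix g assume "g \<in> f ` {..<N}"
    then obtain j where j: "j < N" "g = f j" by auto
    show "g \<in> PiE {..<n} (\<lambda>_. {..K})" unfolding j f_def restrict_PiE_iff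
      using ub[OF j(1)] cell_le K by auto
  qed
  have inj: "inj_on f {..<N}"
  proof (rule inj_onI, rule ccontr)
    fix j k assume j: "j \<in> {..<N}" and k: "k \<in> {..<N}" and fe: "f j = f k" and jk: "j \<noteq> k"
    define c where "c i = cos (theta (u j i) - theta (u k i))" for i
    define e where "e = (pi / (2 * real K))^2 / 2"
    have ci: "0 \<le> c i \<and> c i \<le> 1 \<and> 1 - e \<le> c i" if i: "i < n" for i
    proof -
      have uj: "0 \<le> u j i" "u j i \<le> 1" and uk: "0 \<le> u k i" "u k i \<le> 1" using ub j k i by auto
      have "cell K (u j i) = cell K (u k i)" using fun_cong[OF fe, of i] i by (simp add: f_def)
      then have cl: "\<bar>theta (u j i) - theta (u k i)\<bar> < pi / (2 * real K)"
        using cell_close uj uk K by blast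
      have "(theta (u j i) - theta (u k i))^2 \<le> (pi / (2 * real K))^2"
        using cl by (metis abs_ge_zero less_imp_le power2_abs power_mono)
      then have "1 - c i \<le> e" unfolding c_def e_def using one_minus_cos_le[of "theta (u j i) - theta (u k i)"]
        by linarith
      moreover have "0 \<le> c i" unfolding c_def using theta_bounds[OF uj] theta_bounds[OF uk]
        by (intro cos_ge_zero) auto
      ultimately show ?thesis by (simp add: c_def)
    qed
    have e0: "0 \<le> e" by (simp add: e_def)
    have BC: "(\<Sum>y\<in>L n. sqrt (bern_word n (u k) y * bern_word n (u j) y)) = (\<Prod>i<n. c i)"
      unfolding bern_BC c_def
      using ub j k by (intro prod.cong) (auto simp: bc_factor cos_diff mult.commute)
    have BCge: "(\<Prod>i<n. c i) \<ge> 1 - n * e" using prod_ge_1_minus ci e0 by blast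
    have "bern_prob n (u j) (E j) \<ge> 1 - l1" "bern_prob n (u k) (E j) \<le> l2"
      using code j k jk unfolding is_DI_code_def by auto
    then have dle: "d \<le> bern_prob n (u j) (E j) - bern_prob n (u k) (E j)" by (simp add: d_def)
    have Ej: "E j \<subseteq> L n" using code j unfolding is_DI_code_def L_def by auto
    have "d^2 \<le> 8 * (1 - (\<Sum>y\<in>L n. sqrt (bern_word n (u j) y * bern_word n (u k) y)))"
      using tv_bc[OF ub ub Ej _ dle] j k dpos by (auto simp: d_def)
    also have "(\<Sum>y\<in>L n. sqrt (bern_word n (u j) y * bern_word n (u k) y)) = (\<Prod>i<n. c i)"
      using BC by (simp add: mult.commute)
    finally have d8: "d^2 \<le> 8 * (1 - (\<Prod>i<n. c i))" .
    have "8 * (1 - (\<Prod>i<n. c i)) \<le> 8 * (n * e)" using BCge by simp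
    with d8 have "d^2 \<le> 8 * (n * e)" by (rule order_trans)
    also have "8 * (n * e) = real n * pi^2 / (real K)^2" using K by (simp add: e_def field_simps power2_eq_square)
    finally have "d^2 * (real K)^2 \<le> real n * pi^2" using K by (simp add: field_simps)
    then show False using Kbig by (simp add: d_def)
  qed
  have "N = card (f ` {..<N})" using card_image[OF inj] by simp
  also have "\<dots> \<le> card (PiE {..<n} (\<lambda>_. {..K}))" by (rule card_mono[OF _ img]) (simp add: finite_PiE)
  also have "\<dots> = (K+1)^n" by (simp add: card_PiE)
  finally show ?thesis .
qed




lemma cheb: fixes p T :: "'a \<Rightarrow> real"
  assumes "finite Y" "A \<subseteq> Y" "\<And>y. 0 \<le> p y" "t > 0" "\<forall>y\<in>A. t \<le> \<bar>T y\<bar>"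
  shows "(\<Sum>y\<in>A. p y) \<le> (\<Sum>y\<in>Y. p y * (T y)^2) / t^2"
proof -
  have "(\<Sum>y\<in>A. p y) \<le> (\<Sum>y\<in>A. p y * (T y)^2 / t^2)"
  proof (rule sum_mono)
    fix y assume y: "y \<in> A"
    have "t^2 \<le> (T y)^2" using assms(4,5) y by (metis abs_ge_zero less_imp_le power2_abs power_mono)
    then have "1 \<le> (T y)^2 / t^2" using assms(4) by simp
    then have "p y * 1 \<le> p y * ((T y)^2 / t^2)" using assms(3) by (intro mult_left_mono) auto
    then show "p y \<le> p y * (T y)^2 / t^2" by simp
  qed
  also have "\<dots> \<le> (\<Sum>y\<in>Y. p y * (T y)^2 / t^2)"
    by (rule sum_mono2) (use assms in simp_all)
  also have "\<dots> = (\<Sum>y\<in>Y. p y * (T y)^2) / t^2" by (simp add: sum_divide_distrib)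
  finally show ?thesis .
qed

lemma cheb_bern:
  assumes u: "\<forall>i<n. 0 \<le> u i \<and> u i \<le> 1" and a: "\<forall>i<n. (a i)^2 \<le> 1"
    and A: "A \<subseteq> L n" and D: "D > 0" and far: "\<forall>y\<in>A. D \<le> \<bar>lin a n y - (\<Sum>i<n. a i * u i)\<bar>"
  shows "bern_prob n u A \<le> real n / (4 * D^2)"
proof -
  have "bern_prob n u A \<le> (\<Sum>y\<in>L n. bern_word n u y * (lin a n y - (\<Sum>i<n. a i * u i))^2) / D^2"
    unfolding bern_prob_def
    by (rule cheb[OF finite_L A _ D far]) (rule bern_word_nonneg[OF u])
  also have "(\<Sum>y\<in>L n. bern_word n u y * (lin a n y - (\<Sum>i<n. a i * u i))^2)
      = (\<Sum>i<n. (a i)^2 * (u i * (1 - u i)))" by (rule bern_var)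
  also have "\<dots> \<le> (\<Sum>i<n. 1/4)"
  proof (rule sum_mono)
    fix i assume i: "i \<in> {..<n}"
    have u01: "0 \<le> u i" "u i \<le> 1" using u i by auto
    have e: "u i * (1 - u i) = 1/4 - (u i - 1/2)^2" by (simp add: power2_eq_square algebra_simps)
    have ui: "0 \<le> u i * (1 - u i)" "u i * (1 - u i) \<le> 1/4"
      using u01 mult_nonneg_nonneg[of "u i" "1 - u i"] by (simp, simp only: e, simp)
    have "(a i)^2 * (u i * (1 - u i)) \<le> 1 * (1/4)"
      using a i ui by (intro mult_mono) simp_all
    then show "(a i)^2 * (u i * (1 - u i)) \<le> 1/4" by simp
  qed
  also have "(\<Sum>i<n. (1::real)/4) = real n / 4" by simp
  finally show ?thesis using D by (simp add: divide_right_mono field_simps)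
qed



lemma greedy:
  assumes "finite X" "\<forall>x\<in>X. card {y\<in>X. R x y} \<le> B" "\<And>x y. R x y \<Longrightarrow> R y x" "\<And>x. R x x"
  shows "\<exists>S\<subseteq>X. (\<forall>x\<in>S. \<forall>y\<in>S. x \<noteq> y \<longrightarrow> \<not> R x y) \<and> card X \<le> card S * B"
  using assms(1,2)
proof (induction "card X" arbitrary: X rule: less_induct)
  case less
  show ?case
  proof (cases "X = {}")
    case True then show ?thesis by auto
  next
    case False
    then obtain x where x: "x \<in> X" by auto
    define X' where "X' = X - {y\<in>X. R x y}"
    have fX': "finite X'" using less.prems(1) by (simp add: X'_def)
    have xX': "x \<notin> X'" using assms(4)[of x] by (simp add: X'_def)
    have sub: "X' \<subset> X" using x xX' by (auto simp: X'_def)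
    then have lt: "card X' < card X" using less.prems(1) by (simp add: psubset_card_mono)
    have bd: "\<forall>z\<in>X'. card {y\<in>X'. R z y} \<le> B"
    proof
      fix z assume z: "z \<in> X'"
      have "card {y\<in>X'. R z y} \<le> card {y\<in>X. R z y}"
        by (rule card_mono) (use less.prems(1) sub in auto)
      also have "\<dots> \<le> B" using less.prems(2) z sub by auto
      finally show "card {y\<in>X'. R z y} \<le> B" .
    qed
    obtain S' where S': "S' \<subseteq> X'" "\<forall>a\<in>S'. \<forall>b\<in>S'. a \<noteq> b \<longrightarrow> \<not> R a b"
      "card X' \<le> card S' * B"
      using less.hyps[OF lt fX' bd] by blast
    define S where "S = insert x S'"
    have xS': "x \<notin> S'" using S'(1) xX' by blast
    have fS': "finite S'" using finite_subset[OF S'(1) fX'] .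
    have "S \<subseteq> X" using S'(1) x by (auto simp: S_def X'_def)
    moreover have "\<forall>a\<in>S. \<forall>b\<in>S. a \<noteq> b \<longrightarrow> \<not> R a b"
    proof (intro ballI impI)
      fix a b assume a: "a \<in> S" and b: "b \<in> S" and ab: "a \<noteq> b"
      have nx: "\<not> R x z" if "z \<in> S'" for z using that S'(1) by (auto simp: X'_def)
      show "\<not> R a b"
      proof (cases "a = x")
        case True
        then have "b \<in> S'" using b ab by (simp add: S_def)
        then show ?thesis using nx True by simp
      next
        case False
        then have aS: "a \<in> S'" using a by (simp add: S_def)
        show ?thesis
        proof (cases "b = x")
          case True
          show ?thesis
          proof
            assume "R a b" then have "R x a" using True assms(3)[of a b] by simp
            then show False using nx aS by blast
          qed
        next
          case False
          then have "b \<in> S'" using b by (simp add: S_def)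
          then show ?thesis using S'(2) aS ab by blast
        qed
      qed
    qed
    moreover have "card X \<le> card S * B"
    proof -
      have "X = X' \<union> {y\<in>X. R x y}" by (auto simp: X'_def)
      then have "card X \<le> card X' + card {y\<in>X. R x y}" by (metis card_Un_le)
      also have "\<dots> \<le> card S' * B + B" using S'(3) less.prems(2) x by (intro add_mono) auto
      also have "\<dots> = card S * B" using xS' fS' by (simp add: S_def)
      finally show ?thesis .
    qed
    ultimately show ?thesis by blast
  qed
qed



definition ham :: "nat \<Rightarrow> (nat \<Rightarrow> nat) \<Rightarrow> (nat \<Rightarrow> nat) \<Rightarrow> nat" where
  "ham n v w = card {i\<in>{..<n}. v i \<noteq> w i}"

lemma ball_card:
  assumes v: "v \<in> PiE {..<n} (\<lambda>_. {..<q})" and q: "q \<ge> 1"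
  shows "card {w \<in> PiE {..<n} (\<lambda>_. {..<q}). ham n v w < h} \<le> 2^n * q^h"
proof -
  define X where "X = PiE {..<n} (\<lambda>_. {..<q::nat})"
  define F where "F D = {w\<in>X. \<forall>i\<in>{..<n} - D. w i = v i}" for D
  define I where "I = {D \<in> Pow {..<n}. card D < h}"
  have "{w\<in>X. ham n v w < h} \<subseteq> (\<Union>D\<in>I. F D)"
  proof
    fix w assume w: "w \<in> {w\<in>X. ham n v w < h}"
    define D where "D = {i\<in>{..<n}. v i \<noteq> w i}"
    have "D \<in> I" using w by (auto simp: I_def D_def ham_def)
    moreover have "w \<in> F D" using w by (auto simp: F_def D_def)
    ultimately show "w \<in> (\<Union>D\<in>I. F D)" by blast
  qed
  then have "card {w\<in>X. ham n v w < h} \<le> card (\<Union>D\<in>I. F D)"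
    by (rule card_mono[rotated]) (auto simp: I_def F_def X_def finite_PiE)
  also have "\<dots> \<le> (\<Sum>D\<in>I. card (F D))" by (rule card_UN_le) (simp add: I_def)
  also have "\<dots> \<le> (\<Sum>D\<in>I. q^h)"
  proof (rule sum_mono)
    fix D assume D: "D \<in> I"
    have Dsub: "D \<subseteq> {..<n}" and Dh: "card D < h" using D by (auto simp: I_def)
    have fD: "finite D" using finite_subset[OF Dsub] by simp
    have inj: "inj_on (\<lambda>w. restrict w D) (F D)"
    proof (rule inj_onI)
      fix w w' assume w: "w \<in> F D" and w': "w' \<in> F D" and eq: "restrict w D = restrict w' D"
      show "w = w'"
      proof
        fix i
        show "w i = w' i"
        proof (cases "i \<in> D")
          case True then show ?thesis using fun_cong[OF eq, of i] by simp
        next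
          case False
          show ?thesis
          proof (cases "i < n")
            case True then show ?thesis using w w' False by (auto simp: F_def)
          next
            case False
            then have "w i = undefined" "w' i = undefined" using w w' by (auto simp: F_def X_def PiE_def extensional_def)
            then show ?thesis by simp
          qed
        qed
      qed
    qed
    have img: "(\<lambda>w. restrict w D) ` F D \<subseteq> PiE D (\<lambda>_. {..<q})"
      using Dsub by (auto simp: F_def X_def PiE_iff)
    have "card (F D) = card ((\<lambda>w. restrict w D) ` F D)" using card_image[OF inj] by simp
    also have "\<dots> \<le> card (PiE D (\<lambda>_. {..<q}))" by (rule card_mono[OF _ img]) (simp add: finite_PiE fD)
    also have "\<dots> = q ^ card D" using fD by (simp add: card_PiE)
    also have "\<dots> \<le> q ^ h" using q Dh by (intro power_increasing) auto
    finally show "card (F D) \<le> q^h" .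
  qed
  also have "\<dots> = card I * q^h" by simp
  also have "card I \<le> 2^n"
  proof -
    have "card I \<le> card (Pow {..<n::nat})" by (rule card_mono) (auto simp: I_def)
    then show ?thesis by (simp add: card_Pow)
  qed
  then have "card I * q^h \<le> 2^n * q^h" by simp
  finally show ?thesis by (simp add: X_def)
qed

lemma pigeon:
  assumes "finite S" "\<forall>v\<in>S. f v \<le> (M::nat)"
  shows "\<exists>t. card S \<le> card {v\<in>S. f v = t} * (M + 1)"
proof -
  obtain t where t: "t \<in> {..M}" "\<forall>t'\<in>{..M}. card {v\<in>S. f v = t'} \<le> card {v\<in>S. f v = t}"
  proof -
    have cb: "card {v\<in>S. f v = y} < card S + 1" for y
    proof -
      have "card {v\<in>S. f v = y} \<le> card S" by (rule card_mono[OF assms(1)]) auto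
      then show ?thesis by simp
    qed
    obtain t where "t \<le> M" "\<forall>y. y \<le> M \<longrightarrow> card {v\<in>S. f v = y} \<le> card {v\<in>S. f v = t}"
      using ex_has_greatest_nat[of "\<lambda>t. t \<le> M" 0 "\<lambda>t. card {v\<in>S. f v = t}" "card S + 1"] cb by auto
    then show ?thesis using that by auto
  qed
  have "S = (\<Union>t'\<in>{..M}. {v\<in>S. f v = t'})" using assms(2) by auto
  then have "card S \<le> (\<Sum>t'\<in>{..M}. card {v\<in>S. f v = t'})" by (metis card_UN_le finite_atMost)
  also have "\<dots> \<le> (\<Sum>t'\<in>{..M}. card {v\<in>S. f v = t})" by (rule sum_mono) (use t in auto)
  also have "\<dots> = card {v\<in>S. f v = t} * (M + 1)" by simp
  finally show ?thesis by blast
qed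



lemma sq_expand: "(\<Sum>i<n. (x i - y i)^2) = (\<Sum>i<n. (x i)^2) + (\<Sum>i<n. (y i)^2) - 2 * (\<Sum>i<n. y i * x i::real)"
proof -
  have "(\<Sum>i<n. (x i - y i)^2) = (\<Sum>i<n. (x i)^2 + (y i)^2 - 2 * (y i * x i))"
    by (rule sum.cong) (simp_all add: power2_diff algebra_simps)
  also have "\<dots> = (\<Sum>i<n. (x i)^2) + (\<Sum>i<n. (y i)^2) - 2 * (\<Sum>i<n. y i * x i)"
    by (simp add: sum.distrib sum_subtractf sum_distrib_left)
  finally show ?thesis .
qed

lemma code_exists:
  fixes n m h :: nat and lam l1 l2 :: real
  assumes n: "n \<ge> 1" and m: "m \<ge> 1" and h: "h \<ge> 1" and lam: "lam > 0"
    and key: "4 * real n * (real m)^4 \<le> lam * (real h)^2" and l: "lam \<le> l1" "lam \<le> l2"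
  shows "\<exists>N u E. is_DI_code n N l1 l2 u E \<and> (m+1)^n \<le> N * (2^n * (m+1)^h) * (n*m^2+1)"
proof -
  define q where "q = m + 1"
  define X where "X = PiE {..<n} (\<lambda>_. {..<q})"
  define R where "R v w \<longleftrightarrow> ham n v w < h" for v w
  have finX: "finite X" by (simp add: X_def finite_PiE)
  have hamsym: "ham n v w = ham n w v" for v w
    unfolding ham_def by (rule arg_cong[where f=card]) auto
  have ball: "\<forall>v\<in>X. card {w\<in>X. R v w} \<le> 2^n * q^h"
    using ball_card q_def by (auto simp: X_def R_def)
  obtain S where S: "S \<subseteq> X" "\<forall>v\<in>S. \<forall>w\<in>S. v \<noteq> w \<longrightarrow> \<not> R v w" "card X \<le> card S * (2^n * q^h)"
  proof -
    have sym: "\<And>v w. R v w \<Longrightarrow> R w v" using hamsym by (simp add: R_def)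
    have rfl: "\<And>v. R v v" using h by (simp add: R_def ham_def)
    show ?thesis using greedy[OF finX ball sym rfl] that by blast
  qed
  have cardX: "card X = q^n" by (simp add: X_def card_PiE)
  define sq where "sq v = (\<Sum>i<n. (v i)^2)" for v :: "nat \<Rightarrow> nat"
  have sqb: "\<forall>v\<in>S. sq v \<le> n * m^2"
  proof
    fix v assume "v \<in> S"
    then have v: "v \<in> X" using S(1) by auto
    have "sq v \<le> (\<Sum>i<n. m^2)" unfolding sq_def
    proof (rule sum_mono)
      fix i assume "i \<in> {..<n}"
      then have "v i \<le> m" using v by (force simp: X_def q_def PiE_iff less_Suc_eq_le)
      then show "(v i)^2 \<le> m^2" by (rule power_mono) simp
    qed
    then show "sq v \<le> n * m^2" by simp
  qed
  have finS: "finite S" using finite_subset[OF S(1) finX] .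
  obtain t where t: "card S \<le> card {v\<in>S. sq v = t} * (n * m^2 + 1)"
    using pigeon[OF finS sqb] by blast
  define St where "St = {v\<in>S. sq v = t}"
  define N where "N = card St"
  have finSt: "finite St" using finS by (simp add: St_def)
  have count: "(m+1)^n \<le> N * (2^n * (m+1)^h) * (n*m^2+1)"
  proof -
    have "(m+1)^n \<le> card S * (2^n * q^h)" using S(3) cardX q_def by simp
    also have "\<dots> \<le> (N * (n * m^2 + 1)) * (2^n * q^h)"
      using t by (simp add: N_def St_def)
    finally show ?thesis by (simp add: q_def algebra_simps)
  qed
  obtain g where g: "bij_betw g {0..<N} St" using ex_bij_betw_nat_finite[OF finSt] N_def by blast
  have gS: "g j \<in> St" if "j < N" for j using g that by (auto simp: bij_betw_def)
  have ginj: "g j \<noteq> g k" if "j < N" "k < N" "j \<noteq> k" for j k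
    using g that by (auto simp: bij_betw_def inj_on_def)
  define u where "u j i = real (g j i) / real m" for j i
  define D where "D = real h / (real m)^2"
  define nrm where "nrm a = (\<Sum>i<n. (a i)^2)" for a :: "nat \<Rightarrow> real"
  define E where "E j = {y\<in>L n. nrm (u j) - D/4 \<le> lin (u j) n y}" for j
  have mpos: "real m > 0" using m by simp
  have Dpos: "D > 0" using h m by (simp add: D_def)
  have u01: "\<forall>i<n. 0 \<le> u j i \<and> u j i \<le> 1" if "j < N" for j
  proof (intro allI impI conjI)
    fix i assume i: "i < n"
    have "g j \<in> X" using gS[OF that] S(1) by (auto simp: St_def)
    then have "g j i \<le> m" using i by (force simp: X_def q_def PiE_iff less_Suc_eq_le)
    then show "u j i \<le> 1" using mpos by (simp add: u_def)
    show "0 \<le> u j i" by (simp add: u_def)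
  qed
  have usq: "\<forall>i<n. (u j i)^2 \<le> 1" if "j < N" for j
    using u01[OF that] by (auto intro: power_le_one)
  have nrm_eq: "nrm (u j) = real t / (real m)^2" if "j < N" for j
  proof -
    have "nrm (u j) = (\<Sum>i<n. real ((g j i)^2)) / (real m)^2"
      by (simp add: nrm_def u_def power_divide sum_divide_distrib)
    also have "(\<Sum>i<n. real ((g j i)^2)) = real (sq (g j))" by (simp add: sq_def)
    also have "sq (g j) = t" using gS[OF that] by (simp add: St_def)
    finally show ?thesis .
  qed
  have dist: "(\<Sum>i<n. (u j i - u k i)^2) \<ge> D" if jk: "j < N" "k < N" "j \<noteq> k" for j k
  proof -
    define Ds where "Ds = {i\<in>{..<n}. g j i \<noteq> g k i}"
    have "g j \<in> S" "g k \<in> S" using gS jk by (auto simp: St_def)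
    then have "\<not> R (g j) (g k)" using S(2) ginj[OF jk] by blast
    then have hD: "h \<le> card Ds" by (simp add: R_def ham_def Ds_def)
    have "D \<le> real (card Ds) / (real m)^2" using hD mpos by (simp add: D_def divide_right_mono)
    also have "\<dots> = (\<Sum>i\<in>Ds. 1 / (real m)^2)" by simp
    also have "\<dots> \<le> (\<Sum>i\<in>Ds. (u j i - u k i)^2)"
    proof (rule sum_mono)
      fix i assume "i \<in> Ds"
      then have ne: "g j i \<noteq> g k i" by (simp add: Ds_def)
      have "1 \<le> \<bar>real (g j i) - real (g k i)\<bar>" using ne by (cases "g j i < g k i") auto
      then have "1 \<le> (real (g j i) - real (g k i))^2"
        by (metis abs_ge_zero one_le_power power2_abs)
      then have "1 / (real m)^2 \<le> (real (g j i) - real (g k i))^2 / (real m)^2"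
        using mpos by (intro divide_right_mono) auto
      also have "\<dots> = (u j i - u k i)^2" unfolding u_def by (simp only: diff_divide_distrib[symmetric] power_divide)
      finally show "1 / (real m)^2 \<le> (u j i - u k i)^2" .
    qed
    also have "\<dots> \<le> (\<Sum>i<n. (u j i - u k i)^2)"
      by (rule sum_mono2) (auto simp: Ds_def)
    finally show ?thesis .
  qed
  have err: "real n / (4 * (D/4)^2) \<le> lam"
  proof -
    have "real n / (4 * (D/4)^2) = 4 * real n * (real m)^4 / (real h)^2"
      using mpos h by (simp add: D_def field_simps power2_eq_square power4_eq_xxxx)
    also have "\<dots> \<le> lam" using key h by (simp add: divide_le_eq)
    finally show ?thesis .
  qed
  have code: "is_DI_code n N l1 l2 u E"
    unfolding is_DI_code_def
  proof (rule conjI; intro allI impI)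
    fix j assume j: "j < N"
    have a1: "\<forall>i<n. 0 \<le> u j i \<and> u j i \<le> 1" using u01[OF j] .
    have a2: "E j \<subseteq> {y. length y = n}" by (auto simp: E_def L_def)
    define A where "A = L n - E j"
    have EL: "E j \<subseteq> L n" by (auto simp: E_def)
    have split: "bern_prob n (u j) (E j) = 1 - bern_prob n (u j) A"
    proof -
      have "(\<Sum>y\<in>L n. bern_word n (u j) y) = (\<Sum>y\<in>E j. bern_word n (u j) y) + (\<Sum>y\<in>A. bern_word n (u j) y)"
        unfolding A_def using sum.subset_diff[OF EL finite_L] by (simp add: add.commute)
      then show ?thesis using bern_mass by (simp add: bern_prob_def)
    qed
    have "bern_prob n (u j) A \<le> real n / (4 * (D/4)^2)"
    proof (rule cheb_bern[OF u01[OF j] usq[OF j]])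
      show "A \<subseteq> L n" by (simp add: A_def)
      show "D/4 > 0" using Dpos by simp
      show "\<forall>y\<in>A. D / 4 \<le> \<bar>lin (u j) n y - (\<Sum>i<n. u j i * u j i)\<bar>"
      proof
        fix y assume "y \<in> A"
        then have "lin (u j) n y < nrm (u j) - D/4" by (auto simp: A_def E_def)
        moreover have "(\<Sum>i<n. u j i * u j i) = nrm (u j)" by (simp add: nrm_def power2_eq_square)
        ultimately show "D / 4 \<le> \<bar>lin (u j) n y - (\<Sum>i<n. u j i * u j i)\<bar>" by linarith
      qed
    qed
    then have "1 - l1 \<le> bern_prob n (u j) (E j)" using split err l by linarith
    then show "(\<forall>i<n. 0 \<le> u j i \<and> u j i \<le> 1) \<and> E j \<subseteq> {y. length y = n} \<and> 1 - l1 \<le> bern_prob n (u j) (E j)"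
      using a1 a2 by blast
  next
    fix j k assume j: "j < N" and k: "k < N" and jk: "j \<noteq> k"
    have "bern_prob n (u j) (E k) \<le> real n / (4 * (D/4)^2)"
    proof (rule cheb_bern[OF u01[OF j] usq[OF k]])
      show "E k \<subseteq> L n" by (auto simp: E_def)
      show "D/4 > 0" using Dpos by simp
      have mu: "(\<Sum>i<n. u k i * u j i) \<le> nrm (u k) - D/2"
      proof -
        have "D \<le> (\<Sum>i<n. (u j i - u k i)^2)" using dist[OF j k jk] .
        also have "\<dots> = nrm (u j) + nrm (u k) - 2 * (\<Sum>i<n. u k i * u j i)"
          by (simp add: sq_expand nrm_def)
        also have "nrm (u j) = nrm (u k)" using nrm_eq[OF j] nrm_eq[OF k] by simp
        finally show ?thesis by linarith
      qed
      show "\<forall>y\<in>E k. D / 4 \<le> \<bar>lin (u k) n y - (\<Sum>i<n. u k i * u j i)\<bar>"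
      proof
        fix y assume "y \<in> E k"
        then have "nrm (u k) - D/4 \<le> lin (u k) n y" by (auto simp: E_def)
        then show "D / 4 \<le> \<bar>lin (u k) n y - (\<Sum>i<n. u k i * u j i)\<bar>" using mu by linarith
      qed
    qed
    then show "bern_prob n (u j) (E k) \<le> l2" using err l by linarith
  qed
  show ?thesis using code count by blast
qed



lemma ev_nat: "eventually P (at_top::real filter) \<Longrightarrow> eventually (\<lambda>n. P (real n)) sequentially"
  using filterlim_real_sequentially unfolding filterlim_iff by blast

lemma N_DI_le: assumes "\<And>N u E. is_DI_code n N l1 l2 u E \<Longrightarrow> N \<le> B"
  shows "N_DI n l1 l2 \<le> enat B"
  unfolding N_DI_def by (rule Sup_least) (use assms in auto)

lemma N_DI_ge: "is_DI_code n N l1 l2 u E \<Longrightarrow> enat N \<le> N_DI n l1 l2"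
  unfolding N_DI_def by (rule Sup_upper) blast

lemma rate_upper: assumes n: "n \<ge> 2" and le: "N_DI n l1 l2 \<le> enat B" and B: "B \<ge> 1"
  shows "DI_rate l1 l2 n \<le> ereal (log 2 (real B) / (real n * log 2 (real n)))"
proof -
  obtain M where M: "N_DI n l1 l2 = enat M" using enat_ile[OF le] by blast
  have MB: "M \<le> B" using le M by simp
  have pos: "real n * log 2 (real n) > 0" using n by simp
  have "log 2 (real M) \<le> log 2 (real B)"
  proof (cases "M = 0")
    case True
    have "log 2 (real B) \<ge> 0" using B by simp
    moreover have "log 2 (real M) = 0" using True by (simp add: log_def)
    ultimately show ?thesis by simp
  next
    case False then show ?thesis using MB by simp
  qed
  then have "log 2 (real M) / (real n * log 2 (real n)) \<le> log 2 (real B) / (real n * log 2 (real n))"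
    using pos by (simp add: divide_right_mono)
  then show ?thesis by (simp add: DI_rate_def M)
qed

lemma rate_lower: assumes n: "n \<ge> 2" and ge: "enat N \<le> N_DI n l1 l2" and N: "N \<ge> 1"
  shows "ereal (log 2 (real N) / (real n * log 2 (real n))) \<le> DI_rate l1 l2 n"
proof (cases "N_DI n l1 l2")
  case (enat M)
  have MN: "N \<le> M" using ge enat by simp
  have pos: "real n * log 2 (real n) > 0" using n by simp
  have "log 2 (real N) \<le> log 2 (real M)" using MN N by simp
  then have "log 2 (real N) / (real n * log 2 (real n)) \<le> log 2 (real M) / (real n * log 2 (real n))"
    using pos by (simp add: divide_right_mono)
  then show ?thesis by (simp add: DI_rate_def enat)
next
  case infinity
  then show ?thesis by (simp add: DI_rate_def)
qed

lemma limsup_upper: assumes "l1 + l2 < 1"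
  shows "limsup (DI_rate l1 l2) \<le> ereal (1/2)"
proof -
  define d where "d = 1 - l1 - l2"
  have d: "d > 0" using assms by (simp add: d_def)
  define c where "c = pi / d"
  have c: "c > 0" using d by (simp add: c_def)
  define g where "g x = log 2 (c * sqrt x + 3) / log 2 x" for x :: real
  have glim: "(g \<longlongrightarrow> 1/2) at_top" unfolding g_def using c by real_asymp
  have glim': "((\<lambda>n. ereal (g (real n))) \<longlongrightarrow> ereal (1/2)) sequentially"
    by (rule tendsto_ereal, rule filterlim_compose[OF glim filterlim_real_sequentially])
  have ev: "eventually (\<lambda>n. DI_rate l1 l2 n \<le> ereal (g (real n))) sequentially"
    using eventually_ge_at_top[of 2]
  proof eventually_elim
    case (elim n)
    define K where "K = nat \<lceil>c * sqrt (real n)\<rceil> + 1"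
    have K0: "K > 0" by (simp add: K_def)
    have cs0: "c * sqrt (real n) \<ge> 0" using c by simp
    have Kge: "real K \<ge> c * sqrt (real n) + 1" using cs0 by (simp add: K_def; linarith)
    have Kle: "real K + 1 \<le> c * sqrt (real n) + 3" using cs0 by (simp add: K_def; linarith)
    have Kbig: "real n * pi^2 < d^2 * (real K)^2"
    proof -
      have "c * sqrt (real n) < real K" using Kge by linarith
      then have "(c * sqrt (real n))^2 < (real K)^2" using cs0 by (intro power_strict_mono) auto
      then have "c^2 * real n < (real K)^2" by (simp add: power_mult_distrib)
      then have "(pi/d)^2 * real n * d^2 < (real K)^2 * d^2" using d by (simp add: c_def)
      then show ?thesis using d by (simp add: power_divide field_simps)
    qed
    have le: "N_DI n l1 l2 \<le> enat ((K+1)^n)"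
      by (rule N_DI_le, rule code_card_bound[OF _ _ K0]) (use d Kbig in \<open>auto simp: d_def\<close>)
    have "DI_rate l1 l2 n \<le> ereal (log 2 (real ((K+1)^n)) / (real n * log 2 (real n)))"
      by (rule rate_upper[OF elim le]) simp
    also have "log 2 (real ((K+1)^n)) / (real n * log 2 (real n)) = log 2 (real K + 1) / log 2 (real n)"
      using elim by (simp add: log_nat_power add.commute)
    also have "\<dots> \<le> g (real n)"
    proof -
      have "log 2 (real K + 1) \<le> log 2 (c * sqrt (real n) + 3)" using Kle cs0 by simp
      then show ?thesis unfolding g_def using elim by (simp add: divide_right_mono)
    qed
    finally show ?case by simp
  qed
  have "limsup (DI_rate l1 l2) \<le> limsup (\<lambda>n. ereal (g (real n)))"
    by (rule Limsup_mono[OF ev])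
  also have "\<dots> = ereal (1/2)" by (rule lim_imp_Limsup[OF trivial_limit_sequentially glim'])
  finally show ?thesis .
qed



lemma liminf_lower: assumes l1: "l1 > 0" and l2: "l2 > 0"
  shows "ereal (1/4) \<le> liminf (DI_rate l1 l2)"
proof -
  define lam where "lam = min l1 l2"
  have lam: "lam > 0" "lam \<le> l1" "lam \<le> l2" using l1 l2 by (auto simp: lam_def)
  define c where "c = 2 / sqrt lam"
  have c: "c > 0" using lam by (simp add: c_def)
  define x0 where "x0 x = x powr (1/4) / ln x" for x :: real
  define f where "f x = ((x - c * x / (ln x)^2 - 3) * log 2 (x0 x) - x - log 2 x) / (x * log 2 x)" for x :: real
  have flim: "(f \<longlongrightarrow> 1/4) at_top" unfolding f_def x0_def using c by real_asymp
  have flim': "((\<lambda>n. ereal (f (real n))) \<longlongrightarrow> ereal (1/4)) sequentially"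
    by (rule tendsto_ereal, rule filterlim_compose[OF flim filterlim_real_sequentially])
  have e1: "eventually (\<lambda>x::real. x0 x \<ge> 1) at_top" unfolding x0_def by real_asymp
  have e2: "eventually (\<lambda>x::real. x - c * x / (ln x)^2 - 3 \<ge> 0) at_top" using c by real_asymp
  have ev: "eventually (\<lambda>n. ereal (f (real n)) \<le> DI_rate l1 l2 n) sequentially"
    using ev_nat[OF e1] ev_nat[OF e2] eventually_ge_at_top[of 3]
  proof eventually_elim
    case (elim n)
    have n3: "real n \<ge> 3" using elim by simp
    have lnpos: "ln (real n) > 0" using n3 by simp
    define m where "m = nat \<lfloor>x0 (real n)\<rfloor>"
    have m1: "m \<ge> 1" using elim(1) by (simp add: m_def le_nat_floor)
    have mle: "real m \<le> x0 (real n)" using elim(1) by (simp add: m_def)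
    have mgt: "x0 (real n) < real m + 1" using elim(1) by (simp add: m_def; linarith)
    define r where "r = 2 * (real m)^2 * sqrt (real n / lam)"
    have r0: "r > 0" using m1 lam n3 by (simp add: r_def)
    define h where "h = nat \<lceil>r\<rceil>"
    have hge: "real h \<ge> r" using r0 by (simp add: h_def)
    have hlt: "real h < r + 1" using r0 by (simp add: h_def; linarith)
    have "real h > 0" using hge r0 by linarith
    then have h1: "h \<ge> 1" by simp
    have key: "4 * real n * (real m)^4 \<le> lam * (real h)^2"
    proof -
      have "r^2 \<le> (real h)^2" using hge r0 by (intro power_mono) auto
      moreover have "r^2 = 4 * (real m)^4 * (real n / lam)"
        using lam n3 by (simp add: r_def power_mult_distrib)
      ultimately have "4 * (real m)^4 * (real n / lam) \<le> (real h)^2" by simp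
      then have "4 * (real m)^4 * (real n / lam) * lam \<le> (real h)^2 * lam"
        using lam by (intro mult_right_mono) auto
      then show ?thesis using lam by (simp add: field_simps)
    qed
    obtain N u E where code: "is_DI_code n N l1 l2 u E"
      and cnt: "(m+1)^n \<le> N * (2^n * (m+1)^h) * (n*m^2+1)"
      using code_exists[of n m h lam l1 l2] n3 m1 h1 lam key by auto
    have N1: "N \<ge> 1" using cnt by (cases N) auto
    define q where "q = real m + 1"
    have q2: "q \<ge> 2" using m1 by (simp add: q_def)
    have cntr: "q ^ n \<le> real N * (2^n * q^h) * (real n * (real m)^2 + 1)"
    proof -
      have "real ((m+1)^n) \<le> real (N * (2^n * (m+1)^h) * (n*m^2+1))" using cnt by (simp only: of_nat_le_iff)
      then show ?thesis by (simp add: q_def algebra_simps)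
    qed
    have nm: "real n * (real m)^2 + 1 \<le> real n * q^2"
    proof -
      have "(real m)^2 + 1 \<le> q^2" using m1 by (simp add: q_def power2_eq_square algebra_simps)
      then have "real n * ((real m)^2 + 1) \<le> real n * q^2" by (intro mult_left_mono) auto
      then show ?thesis using n3 by (simp add: algebra_simps)
    qed
    have "0 \<le> real n * (real m)^2" by simp
    then have pnm: "0 < real n * (real m)^2 + 1" by linarith
    have logN: "log 2 (real N) \<ge> (real n - real h - 2) * log 2 q - real n - log 2 (real n)"
    proof -
      have pos1: "real N * (2^n * q^h) > 0" using N1 q2 by simp
      have "real n * log 2 q = log 2 (q^n)" using q2 by (simp add: log_nat_power)
      also have "\<dots> \<le> log 2 (real N * (2^n * q^h) * (real n * (real m)^2 + 1))"
      proof -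
        have "0 < real N * (2^n * q^h) * (real n * (real m)^2 + 1)"
          using pos1 pnm by (rule mult_pos_pos)
        then show ?thesis using cntr q2 by (subst log_le_cancel_iff) auto
      qed
      also have "\<dots> = log 2 (real N) + real n + real h * log 2 q + log 2 (real n * (real m)^2 + 1)"
        using N1 q2 pnm by (simp add: log_mult log_nat_power)
      also have "log 2 (real n * (real m)^2 + 1) \<le> log 2 (real n * q^2)"
        using nm q2 n3 pnm by (subst log_le_cancel_iff) auto
      also have "\<dots> = log 2 (real n) + 2 * log 2 q" using n3 q2 by (simp add: log_mult log_nat_power)
      finally show ?thesis by (simp add: algebra_simps)
    qed
    define H where "H = c * real n / (ln (real n))^2 + 1"
    have hH: "real h \<le> H"
    proof -
      have "(real m)^2 \<le> (x0 (real n))^2" using mle by (intro power_mono) auto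
      also have "(x0 (real n))^2 = sqrt (real n) / (ln (real n))^2"
      proof -
        have "(real n powr (1/4))^2 = real n powr (1/4) * real n powr (1/4)" by (simp add: power2_eq_square)
        also have "\<dots> = real n powr (1/4 + 1/4)" by (simp only: powr_add)
        also have "\<dots> = sqrt (real n)" using powr_half_sqrt[of "real n"] by simp
        finally show ?thesis unfolding x0_def by (simp add: power_divide)
      qed
      finally have m2: "(real m)^2 \<le> sqrt (real n) / (ln (real n))^2" .
      have "r \<le> 2 * (sqrt (real n) / (ln (real n))^2) * sqrt (real n / lam)"
        unfolding r_def using m2 lam by (intro mult_right_mono mult_left_mono) auto
      also have "\<dots> = c * real n / (ln (real n))^2"
        using lam n3 by (simp add: c_def real_sqrt_divide field_simps)
      finally show ?thesis using hlt by (simp add: H_def)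
    qed
    have x01: "x0 (real n) \<ge> 1" using elim(1) .
    have qx: "x0 (real n) \<le> q" using mgt by (simp add: q_def)
    have lx: "0 \<le> log 2 (x0 (real n))" using x01 by simp
    have lq: "log 2 (x0 (real n)) \<le> log 2 q" using qx x01 by simp
    have nH: "real n - H - 2 \<ge> 0" using elim(2) by (simp add: H_def)
    have "(real n - H - 2) * log 2 (x0 (real n)) \<le> (real n - real h - 2) * log 2 q"
    proof -
      have "(real n - H - 2) * log 2 (x0 (real n)) \<le> (real n - H - 2) * log 2 q"
        using nH lq by (intro mult_left_mono) auto
      also have "\<dots> \<le> (real n - real h - 2) * log 2 q"
        using hH lx lq by (intro mult_right_mono) auto
      finally show ?thesis .
    qed
    then have num: "(real n - c * real n / (ln (real n))^2 - 3) * log 2 (x0 (real n)) - real n - log 2 (real n)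
        \<le> log 2 (real N)" using logN by (simp add: H_def algebra_simps)
    have pos: "real n * log 2 (real n) > 0" using n3 by simp
    have "f (real n) \<le> log 2 (real N) / (real n * log 2 (real n))"
      unfolding f_def using num pos by (simp add: divide_right_mono)
    also have "ereal \<dots> \<le> DI_rate l1 l2 n"
      by (rule rate_lower[OF _ N_DI_ge[OF code] N1]) (use n3 in simp)
    finally show ?case by simp
  qed
  have "ereal (1/4) = liminf (\<lambda>n. ereal (f (real n)))"
    by (rule lim_imp_Liminf[OF trivial_limit_sequentially flim', symmetric])
  also have "\<dots> \<le> liminf (DI_rate l1 l2)" by (rule Liminf_mono[OF ev])
  finally show ?thesis .
qed


theorem theorem4:
  fixes l1 l2 :: real
  assumes "l1 > 0" and "l2 > 0" and "l1 + l2 < 1"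
  shows "ereal (1/4) \<le> C_DI_dot \<and> C_DI_dot \<le> limsup (DI_rate l1 l2)
         \<and> limsup (DI_rate l1 l2) \<le> ereal (1/2)"
proof -
  have low: "ereal (1/4) \<le> C_DI_dot" unfolding C_DI_dot_def
    by (intro INF_greatest) (simp add: liminf_lower)
  have mid: "C_DI_dot \<le> liminf (DI_rate l1 l2)" unfolding C_DI_dot_def
  proof (rule INF_lower2[of l1])
    show "l1 \<in> {0<..}" using assms by simp
    show "(INF l2\<in>{0<..}. liminf (DI_rate l1 l2)) \<le> liminf (DI_rate l1 l2)"
      by (rule INF_lower) (use assms in simp)
  qed
  have "liminf (DI_rate l1 l2) \<le> limsup (DI_rate l1 l2)" by (rule Liminf_le_Limsup) simp
  with mid have mid2: "C_DI_dot \<le> limsup (DI_rate l1 l2)" by (rule order_trans)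
  have up: "limsup (DI_rate l1 l2) \<le> ereal (1/2)" using limsup_upper assms(3) .
  show ?thesis using low mid2 up by blast
qed

end
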